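(* Let $\Omega\subseteq\mathbb{R}^n$ be open and let $f\in\mathbb{A}(\Omega)$ be H-continuous. If there is a dense subset $D$ of $\Omega$ (not necessarily open) such that $f(x)$ is finite for every $x\in D$, then $f$ is nearly finite.
   Context: $\overline{\mathbb{R}}=\mathbb{R}\cup\{\pm\infty\}$, $\mathbb{I}\overline{\mathbb{R}}$ is the set of closed intervals $[\underline a,\overline a]$ with $\underline a\le\overline a$ in $\overline{\mathbb{R}}$, $a\in\overline{\mathbb{R}}$ identified with $[a,a]$. $\mathbb{A}(\Omega)$ is the set of functions $\Omega\to\mathbb{I}\overline{\mathbb{R}}$. An interval value $f(x)$ is finite if both endpoints are real numbers; $f$ is nearly finite if there is an open dense subset $D'$ of $\Omega$ with $f(x)$ finite for all $x\in D'$. $B_\delta(x)=\{y\in\Omega:\|x-y\|<\delta\}$. For $f\in\mathbb{A}(\Omega)$: $I(f)(x)=\sup_{\delta>0}\inf\{z\in f(y):y\in B_\delta(x)\}$, $S(f)(x)=\inf_{\delta>0}\sup\{z\in f(y):y\in B_\delta(x)\}$, $F(f)(x)=[I(f)(x),S(f)(x)]$. $f$ is H-continuous if for every $g\in\mathbb{A}(\Omega)$ with $g(x)\subseteq f(x)$ for all $x$ one has $F(g)=f$. *)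

theory Defs
  imports "HOL-Analysis.Analysis"
begin

text \<open>An extended-real interval [a,b] is represented by the pair (a,b) with a \<le> b.\<close>
type_synonym iereal = "ereal \<times> ereal"

definition ival :: "iereal \<Rightarrow> ereal set" where
  "ival a = {z. fst a \<le> z \<and> z \<le> snd a}"

definition intfun :: "(real^'n) set \<Rightarrow> (real^'n \<Rightarrow> iereal) \<Rightarrow> bool" where
  "intfun \<Omega> f \<longleftrightarrow> (\<forall>x\<in>\<Omega>. fst (f x) \<le> snd (f x))"

definition Ball_in :: "(real^'n) set \<Rightarrow> real^'n \<Rightarrow> real \<Rightarrow> (real^'n) set" where
  "Ball_in \<Omega> x \<delta> = {y\<in>\<Omega>. norm (x - y) < \<delta>}"

definition lowerI :: "(real^'n) set \<Rightarrow> (real^'n \<Rightarrow> iereal) \<Rightarrow> real^'n \<Rightarrow> ereal" where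
  "lowerI \<Omega> f x = (SUP \<delta>\<in>{0<..}. Inf {z. \<exists>y\<in>Ball_in \<Omega> x \<delta>. z \<in> ival (f y)})"

definition upperS :: "(real^'n) set \<Rightarrow> (real^'n \<Rightarrow> iereal) \<Rightarrow> real^'n \<Rightarrow> ereal" where
  "upperS \<Omega> f x = (INF \<delta>\<in>{0<..}. Sup {z. \<exists>y\<in>Ball_in \<Omega> x \<delta>. z \<in> ival (f y)})"

definition Fop :: "(real^'n) set \<Rightarrow> (real^'n \<Rightarrow> iereal) \<Rightarrow> real^'n \<Rightarrow> iereal" where
  "Fop \<Omega> f x = (lowerI \<Omega> f x, upperS \<Omega> f x)"

definition H_continuous :: "(real^'n) set \<Rightarrow> (real^'n \<Rightarrow> iereal) \<Rightarrow> bool" where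
  "H_continuous \<Omega> f \<longleftrightarrow>
     (\<forall>g. intfun \<Omega> g \<and> (\<forall>x\<in>\<Omega>. ival (g x) \<subseteq> ival (f x)) \<longrightarrow> (\<forall>x\<in>\<Omega>. Fop \<Omega> g x = f x))"

definition finite_ival :: "iereal \<Rightarrow> bool" where
  "finite_ival a \<longleftrightarrow> \<bar>fst a\<bar> \<noteq> \<infinity> \<and> \<bar>snd a\<bar> \<noteq> \<infinity>"

definition nearly_finite :: "(real^'n) set \<Rightarrow> (real^'n \<Rightarrow> iereal) \<Rightarrow> bool" where
  "nearly_finite \<Omega> f \<longleftrightarrow>
     (\<exists>D'. open D' \<and> D' \<subseteq> \<Omega> \<and> \<Omega> \<subseteq> closure D' \<and> (\<forall>x\<in>D'. finite_ival (f x)))"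

end

theory Submission
  imports Defs
begin

lemma lower_open:
  assumes "lowerI \<Omega> f x \<noteq> -\<infinity>"
  shows "\<exists>e>0. \<forall>y\<in>\<Omega>. dist x y < e \<longrightarrow> lowerI \<Omega> f y \<noteq> -\<infinity>"
proof -
  let ?S = "\<lambda>x \<delta>. {z. \<exists>y\<in>Ball_in \<Omega> x \<delta>. z \<in> ival (f y)}"
  have "-\<infinity> < lowerI \<Omega> f x" using assms by simp
  then obtain d where d: "d > 0" "-\<infinity> < Inf (?S x d)"
    unfolding lowerI_def less_SUP_iff by auto
  have "lowerI \<Omega> f y \<noteq> -\<infinity>" if "y \<in> \<Omega>" "dist x y < d/2" for y
  proof -
    have sub: "?S y (d/2) \<subseteq> ?S x d"
    proof
      fix z assume "z \<in> ?S y (d/2)"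
      then obtain w where w: "w \<in> \<Omega>" "norm (y - w) < d/2" "z \<in> ival (f w)"
        unfolding Ball_in_def by auto
      have "norm (x - w) \<le> norm (x - y) + norm (y - w)"
        using dist_triangle[of x w y] by (simp add: dist_norm)
      moreover have "norm (x - y) < d/2" using that by (simp add: dist_norm)
      ultimately have "norm (x - w) < d" using w by linarith
      then show "z \<in> ?S x d" using w unfolding Ball_in_def by auto
    qed
    have "Inf (?S x d) \<le> Inf (?S y (d/2))" by (rule Inf_superset_mono[OF sub])
    also have "\<dots> \<le> lowerI \<Omega> f y" unfolding lowerI_def
      by (rule SUP_upper) (use d in auto)
    finally show ?thesis using d by auto
  qed
  then show ?thesis using d by (intro exI[of _ "d/2"]) auto
qed

lemma upper_open:
  assumes "upperS \<Omega> f x \<noteq> \<infinity>"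
  shows "\<exists>e>0. \<forall>y\<in>\<Omega>. dist x y < e \<longrightarrow> upperS \<Omega> f y \<noteq> \<infinity>"
proof -
  let ?S = "\<lambda>x \<delta>. {z. \<exists>y\<in>Ball_in \<Omega> x \<delta>. z \<in> ival (f y)}"
  have "upperS \<Omega> f x < \<infinity>" using assms by (simp add: less_top[symmetric])
  then obtain d where d: "d > 0" "Sup (?S x d) < \<infinity>"
    unfolding upperS_def INF_less_iff by auto
  have "upperS \<Omega> f y \<noteq> \<infinity>" if "y \<in> \<Omega>" "dist x y < d/2" for y
  proof -
    have sub: "?S y (d/2) \<subseteq> ?S x d"
    proof
      fix z assume "z \<in> ?S y (d/2)"
      then obtain w where w: "w \<in> \<Omega>" "norm (y - w) < d/2" "z \<in> ival (f w)"
        unfolding Ball_in_def by auto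
      have "norm (x - w) \<le> norm (x - y) + norm (y - w)"
        using dist_triangle[of x w y] by (simp add: dist_norm)
      moreover have "norm (x - y) < d/2" using that by (simp add: dist_norm)
      ultimately have "norm (x - w) < d" using w by linarith
      then show "z \<in> ?S x d" using w unfolding Ball_in_def by auto
    qed
    have "upperS \<Omega> f y \<le> Sup (?S y (d/2))" unfolding upperS_def
      by (rule INF_lower) (use d in auto)
    also have "\<dots> \<le> Sup (?S x d)" by (rule Sup_subset_mono[OF sub])
    finally show ?thesis using d by auto
  qed
  then show ?thesis using d by (intro exI[of _ "d/2"]) auto
qed

theorem theorem22:
  fixes \<Omega> :: "(real^'n) set" and f :: "real^'n \<Rightarrow> ereal \<times> ereal" and D :: "(real^'n) set"
  assumes "open \<Omega>"
    and "intfun \<Omega> f"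
    and "H_continuous \<Omega> f"
    and "D \<subseteq> \<Omega>" and "\<Omega> \<subseteq> closure D"
    and "\<forall>x\<in>D. finite_ival (f x)"
  shows "nearly_finite \<Omega> f"
proof -
  have fix_: "\<And>x. x \<in> \<Omega> \<Longrightarrow> Fop \<Omega> f x = f x"
    using assms(2,3) unfolding H_continuous_def by blast
  have lo: "fst (f x) = lowerI \<Omega> f x" and up: "snd (f x) = upperS \<Omega> f x" if "x \<in> \<Omega>" for x
    using fix_[OF that] unfolding Fop_def by (metis fst_conv snd_conv)+
  have fin: "finite_ival (f x) \<longleftrightarrow> fst (f x) \<noteq> -\<infinity> \<and> snd (f x) \<noteq> \<infinity>" if "x \<in> \<Omega>" for x
    using assms(2) that unfolding intfun_def finite_ival_def
    by (cases "fst (f x)"; cases "snd (f x)") auto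
  define D' where "D' = {x\<in>\<Omega>. finite_ival (f x)}"
  have "open D'"
    unfolding open_dist
  proof
    fix x assume x: "x \<in> D'"
    then have xO: "x \<in> \<Omega>" and a: "lowerI \<Omega> f x \<noteq> -\<infinity>" and b: "upperS \<Omega> f x \<noteq> \<infinity>"
      using fin lo up unfolding D'_def by auto
    obtain e1 where e1: "e1 > 0" "\<forall>y\<in>\<Omega>. dist x y < e1 \<longrightarrow> lowerI \<Omega> f y \<noteq> -\<infinity>"
      using lower_open[OF a] by blast
    obtain e2 where e2: "e2 > 0" "\<forall>y\<in>\<Omega>. dist x y < e2 \<longrightarrow> upperS \<Omega> f y \<noteq> \<infinity>"
      using upper_open[OF b] by blast
    obtain e3 where e3: "e3 > 0" "\<forall>y. dist y x < e3 \<longrightarrow> y \<in> \<Omega>"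
      using assms(1) xO unfolding open_dist by blast
    show "\<exists>e>0. \<forall>y. dist y x < e \<longrightarrow> y \<in> D'"
    proof (intro exI[of _ "min e1 (min e2 e3)"] conjI allI impI)
      fix y assume "dist y x < min e1 (min e2 e3)"
      then have "y \<in> \<Omega>" "dist x y < e1" "dist x y < e2" using e3 by (auto simp: dist_commute)
      then show "y \<in> D'" using e1 e2 fin lo up unfolding D'_def by auto
    qed (use e1 e2 e3 in auto)
  qed
  moreover have "D \<subseteq> D'" using assms(4,6) unfolding D'_def by auto
  then have "\<Omega> \<subseteq> closure D'" using assms(5) closure_mono by blast
  ultimately show ?thesis unfolding nearly_finite_def D'_def by auto
qed

end
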